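(* Let $\mathbf{X}$ be an $N$-sgrp over $\mathbb{R}^d$ on $[0,T]$ and $(f_1,\dots,f_d)$ smooth vector fields on $\mathbb{R}^e$ with bounded derivatives of all orders. A path $Y:[0,T]\to\mathbb{R}^e$ is a solution of the differential equation driven by $\mathbf{X}$ with vector fields $(f_1,\dots,f_d)$ if and only if for all $s,t\in[0,T]$ $$Y_t-Y_s=\sum_{1\le|w|\le N}f_w(Y_s)\langle\mathbf{X}_{s,t},w\rangle+r_{s,t},$$ where $\mathbf{X}_{s,t}=\mathbf{X}_s^{-1}\otimes_N\mathbf{X}_t$ and $r_{s,t}=o(|t-s|)$ as $t\to s$.
   Context: Fix $T>0$, $d,e\ge1$. $T^N(\mathbb{R}^d)$: span of words $w$ in letters $\{1,\dots,d\}$ of length $|w|\le N$ (incl. empty word $\mathbf{1}$), with truncated concatenation product $\otimes_N$; $\langle\mathbf{x},w\rangle$ is the coefficient of $w$ in $\mathbf{x}$. Shuffle product: bilinear, unit $\mathbf{1}$, $wi\sqcup\!\sqcup vj=(w\sqcup\!\sqcup vj)i+(wi\sqcup\!\sqcup v)j$. An $N$-sgrp is a non-zero path $\mathbf{X}:[0,T]\to T^N(\mathbb{R}^d)$ with $\langle\mathbf{X}_t,v\sqcup\!\sqcup w\rangle=\langle\mathbf{X}_t,v\rangle\langle\mathbf{X}_t,w\rangle$ for all $t$ and words with $|v|+|w|\le N$, and with $t\mapsto\langle\mathbf{X}_t,w\rangle$ smooth for $|w|\le N$ (then $\langle\mathbf{X}_t,\mathbf{1}\rangle=1$ and $\mathbf{X}_t$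 is $\otimes_N$-invertible). Its diagonal derivative is $\dot{\mathbf{X}}_{s,s}=\partial_t|_{t=s}\mathbf{X}_{s,t}$ with $\mathbf{X}_{s,t}=\mathbf{X}_s^{-1}\otimes_N\mathbf{X}_t$. For vector fields $f=f^i\partial_i$, $g=g^j\partial_j$ on $\mathbb{R}^e$ let $f\vartriangleright g:=f^i(\partial_ig^j)\partial_j$. Set $f_{\mathbf{1}}=\mathrm{id}$ and for $w=\ell_1\cdots\ell_n$, $n\ge1$, $f_w:=f_{\ell_1}\vartriangleright(\cdots\vartriangleright(f_{\ell_{n-1}}\vartriangleright f_{\ell_n})\cdots)$. A smooth path $Y$ is a solution of the differential equation driven by $\mathbf{X}$ with vector fields $(f_1,\dots,f_d)$ if $\dot Y_s=\sum_{|w|\le N}f_w(Y_s)\langle\dot{\mathbf{X}}_{s,s},w\rangle$ for all $s$ (note $\langle\dot{\mathbf{X}}_{s,s},\mathbf{1}\rangle=0$). *)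

theory Defs
  imports "HOL-Analysis.Analysis" "HOL-Library.Landau_Symbols"
begin

text \<open>Elements of the truncated
tensor algebra T^N(R^d) are represented by their coefficient functions
(word \<Rightarrow> real), vanishing outside the words of length \<le> N.\<close>

definition words :: "nat \<Rightarrow> nat \<Rightarrow> nat list set" where
  "words d N = {w. set w \<subseteq> {1..d} \<and> length w \<le> N}"

definition tens :: "nat \<Rightarrow> nat \<Rightarrow> (nat list \<Rightarrow> real) set" where
  "tens d N = {x. \<forall>w. w \<notin> words d N \<longrightarrow> x w = 0}"

definition tunit :: "nat list \<Rightarrow> real" where
  "tunit w = (if w = [] then 1 else 0)"

definition tprod :: "nat \<Rightarrow> nat \<Rightarrow> (nat list \<Rightarrow> real) \<Rightarrow> (nat list \<Rightarrow> real) \<Rightarrow> (nat list \<Rightarrow> real)" where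
  "tprod d N x y w = (if w \<in> words d N then (\<Sum>i\<le>length w. x (take i w) * y (drop i w)) else 0)"

definition tinv :: "nat \<Rightarrow> nat \<Rightarrow> (nat list \<Rightarrow> real) \<Rightarrow> (nat list \<Rightarrow> real)" where
  "tinv d N x = (THE y. y \<in> tens d N \<and> tprod d N x y = tunit \<and> tprod d N y x = tunit)"

definition incr :: "nat \<Rightarrow> nat \<Rightarrow> (real \<Rightarrow> nat list \<Rightarrow> real) \<Rightarrow> real \<Rightarrow> real \<Rightarrow> nat list \<Rightarrow> real" where
  "incr d N X s t = tprod d N (tinv d N (X s)) (X t)"

text \<open>Shuffle product with multiplicities (a list of words = formal sum), following
w i \<sqcup> v j = (w \<sqcup> v j) i + (w i \<sqcup> v) j, realised by reversing the front recursion.\<close>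
fun shuffle_front :: "'a list \<Rightarrow> 'a list \<Rightarrow> 'a list list" where
  "shuffle_front [] v = [v]"
| "shuffle_front w [] = [w]"
| "shuffle_front (i # w) (j # v) =
     map (Cons i) (shuffle_front w (j # v)) @ map (Cons j) (shuffle_front (i # w) v)"

definition shuffle :: "'a list \<Rightarrow> 'a list \<Rightarrow> 'a list list" where
  "shuffle w v = map rev (shuffle_front (rev w) (rev v))"

definition pair_shuffle :: "(nat list \<Rightarrow> real) \<Rightarrow> nat list \<Rightarrow> nat list \<Rightarrow> real" where
  "pair_shuffle x v w = sum_list (map x (shuffle v w))"

text \<open>Smoothness (C^\<infinity>) on a set, with one-sided derivatives at boundary points.\<close>
definition smooth_on :: "real set \<Rightarrow> (real \<Rightarrow> 'a::real_normed_vector) \<Rightarrow> bool" where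
  "smooth_on S g \<longleftrightarrow> (\<exists>D. D 0 = g \<and>
      (\<forall>k. \<forall>t\<in>S. (D k has_vector_derivative D (Suc k) t) (at t within S)))"

definition sgrp :: "nat \<Rightarrow> nat \<Rightarrow> real \<Rightarrow> (real \<Rightarrow> nat list \<Rightarrow> real) \<Rightarrow> bool" where
  "sgrp d N T X \<longleftrightarrow>
     (\<forall>t\<in>{0..T}. X t \<in> tens d N)
   \<and> (\<exists>t\<in>{0..T}. X t \<noteq> (\<lambda>_. 0))
   \<and> (\<forall>t\<in>{0..T}. \<forall>v w. set v \<subseteq> {1..d} \<longrightarrow> set w \<subseteq> {1..d} \<longrightarrow>
        length v + length w \<le> N \<longrightarrow> pair_shuffle (X t) v w = X t v * X t w)
   \<and> (\<forall>w\<in>words d N. smooth_on {0..T} (\<lambda>t. X t w))"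

definition diag_deriv :: "nat \<Rightarrow> nat \<Rightarrow> real \<Rightarrow> (real \<Rightarrow> nat list \<Rightarrow> real) \<Rightarrow> real \<Rightarrow> nat list \<Rightarrow> real" where
  "diag_deriv d N T X s w = vector_derivative (\<lambda>t. incr d N X s t w) (at s within {0..T})"

text \<open>Vector fields on R^e. (f \<rhd> g)(y) = Dg(y) f(y), i.e. f^i (\<partial>_i g^j) \<partial>_j.\<close>
type_synonym 'e vfield = "real ^ 'e \<Rightarrow> real ^ 'e"

definition vf_tri :: "'e::finite vfield \<Rightarrow> 'e vfield \<Rightarrow> 'e vfield" where
  "vf_tri g h = (\<lambda>y. frechet_derivative h (at y) (g y))"

fun fw :: "(nat \<Rightarrow> 'e::finite vfield) \<Rightarrow> nat list \<Rightarrow> 'e vfield" where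
  "fw f [] = id"
| "fw f [l] = f l"
| "fw f (l # m # w) = vf_tri (f l) (fw f (m # w))"

definition pd :: "'e::finite \<Rightarrow> 'e vfield \<Rightarrow> 'e vfield" where
  "pd i g = (\<lambda>y. frechet_derivative g (at y) (axis i 1))"

fun iter_pd :: "'e::finite list \<Rightarrow> 'e vfield \<Rightarrow> 'e vfield" where
  "iter_pd [] g = g"
| "iter_pd (i # is) g = pd i (iter_pd is g)"

definition smooth_bdd :: "'e::finite vfield \<Rightarrow> bool" where
  "smooth_bdd g \<longleftrightarrow> (\<forall>is. (\<forall>y. iter_pd is g differentiable (at y))
                         \<and> (is \<noteq> [] \<longrightarrow> bounded (range (iter_pd is g))))"

definition is_solution :: "nat \<Rightarrow> nat \<Rightarrow> real \<Rightarrow> (real \<Rightarrow> nat list \<Rightarrow> real) \<Rightarrow>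
    (nat \<Rightarrow> 'e::finite vfield) \<Rightarrow> (real \<Rightarrow> real ^ 'e) \<Rightarrow> bool" where
  "is_solution d N T X f Y \<longleftrightarrow> smooth_on {0..T} Y \<and>
     (\<forall>s\<in>{0..T}. (Y has_vector_derivative
        (\<Sum>w\<in>words d N. diag_deriv d N T X s w *\<^sub>R fw f w (Y s))) (at s within {0..T}))"

end

theory Submission
  imports Defs
begin

lemma words_Nil[simp]: "[] \<in> words d N"
  by (simp add: words_def)

lemma words_take: "w \<in> words d N \<Longrightarrow> take i w \<in> words d N"
  by (auto simp: words_def dest: in_set_takeD)

lemma words_drop: "w \<in> words d N \<Longrightarrow> drop i w \<in> words d N"
  by (auto simp: words_def dest: in_set_dropD)

lemma tprod_in_tens: "tprod d N x y \<in> tens d N"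
  by (simp add: tens_def tprod_def)

lemma tunit_in_tens: "tunit \<in> tens d N"
  by (simp add: tens_def tunit_def)

lemma tprod_words: "w \<in> words d N \<Longrightarrow> tprod d N x y w = (\<Sum>i\<le>length w. x (take i w) * y (drop i w))"
  by (simp add: tprod_def)

lemma tprod_tunit_left: "y \<in> tens d N \<Longrightarrow> tprod d N tunit y = y"
proof
  fix w assume y: "y \<in> tens d N"
  show "tprod d N tunit y w = y w"
  proof (cases "w \<in> words d N")
    case True
    have "(\<Sum>i\<le>length w. tunit (take i w) * y (drop i w)) = (\<Sum>i\<in>{0}. tunit (take i w) * y (drop i w))"
      by (rule sum.mono_neutral_right) (auto simp: tunit_def)
    then show ?thesis using True by (simp add: tprod_def tunit_def)
  next
    case False then show ?thesis using y by (simp add: tprod_def tens_def)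
  qed
qed

lemma tprod_tunit_right: "y \<in> tens d N \<Longrightarrow> tprod d N y tunit = y"
proof
  fix w assume y: "y \<in> tens d N"
  show "tprod d N y tunit w = y w"
  proof (cases "w \<in> words d N")
    case True
    have "(\<Sum>i\<le>length w. y (take i w) * tunit (drop i w)) = (\<Sum>i\<in>{length w}. y (take i w) * tunit (drop i w))"
      by (rule sum.mono_neutral_right) (auto simp: tunit_def)
    then show ?thesis using True by (simp add: tprod_def tunit_def)
  next
    case False then show ?thesis using y by (simp add: tprod_def tens_def)
  qed
qed

lemma tprod_assoc: "tprod d N (tprod d N a b) c = tprod d N a (tprod d N b c)"
proof
  fix w
  show "tprod d N (tprod d N a b) c w = tprod d N a (tprod d N b c) w"
  proof (cases "w \<in> words d N")
    case False then show ?thesis by (simp add: tprod_def)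
  next
    case True
    define n where "n = length w"
    define F where "F j i = a (take j w) * b (take (i - j) (drop j w)) * c (drop i w)" for j i
    have L: "tprod d N (tprod d N a b) c w = (\<Sum>i\<le>n. \<Sum>j\<in>{j. j \<in> {..n} \<and> j \<le> i}. F j i)"
    proof -
      have "tprod d N (tprod d N a b) c w = (\<Sum>i\<le>n. (\<Sum>j\<le>i. a (take j (take i w)) * b (drop j (take i w))) * c (drop i w))"
      proof -
        have "tprod d N (tprod d N a b) c w = (\<Sum>i\<le>n. tprod d N a b (take i w) * c (drop i w))"
          using True by (simp add: tprod_words n_def)
        also have "\<dots> = (\<Sum>i\<le>n. (\<Sum>j\<le>i. a (take j (take i w)) * b (drop j (take i w))) * c (drop i w))"
        proof (rule sum.cong[OF refl])
          fix i assume "i \<in> {..n}"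
          then have "length (take i w) = i" by (simp add: n_def)
          then show "tprod d N a b (take i w) * c (drop i w) = (\<Sum>j\<le>i. a (take j (take i w)) * b (drop j (take i w))) * c (drop i w)"
            using tprod_words[OF words_take[OF True], of a b i] by simp
        qed
        finally show ?thesis .
      qed
      also have "\<dots> = (\<Sum>i\<le>n. \<Sum>j\<in>{j. j \<in> {..n} \<and> j \<le> i}. F j i)"
      proof (rule sum.cong[OF refl])
        fix i assume i: "i \<in> {..n}"
        have e: "{j. j \<in> {..n} \<and> j \<le> i} = {..i}" using i by auto
        show "(\<Sum>j\<le>i. a (take j (take i w)) * b (drop j (take i w))) * c (drop i w) = (\<Sum>j\<in>{j. j \<in> {..n} \<and> j \<le> i}. F j i)"
          unfolding e sum_distrib_right F_def
          by (rule sum.cong) (auto simp: min_def take_drop)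
      qed
      finally show ?thesis .
    qed
    have R: "tprod d N a (tprod d N b c) w = (\<Sum>j\<le>n. \<Sum>i\<in>{i. i \<in> {..n} \<and> j \<le> i}. F j i)"
    proof -
      have "tprod d N a (tprod d N b c) w = (\<Sum>j\<le>n. a (take j w) * (\<Sum>k\<le>n - j. b (take k (drop j w)) * c (drop k (drop j w))))"
      proof -
        have "tprod d N a (tprod d N b c) w = (\<Sum>j\<le>n. a (take j w) * tprod d N b c (drop j w))"
          using True by (simp add: tprod_words n_def)
        also have "\<dots> = (\<Sum>j\<le>n. a (take j w) * (\<Sum>k\<le>n - j. b (take k (drop j w)) * c (drop k (drop j w))))"
        proof (rule sum.cong[OF refl])
          fix j assume "j \<in> {..n}"
          have "length (drop j w) = n - j" by (simp add: n_def)
          then show "a (take j w) * tprod d N b c (drop j w) = a (take j w) * (\<Sum>k\<le>n - j. b (take k (drop j w)) * c (drop k (drop j w)))"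
            using tprod_words[OF words_drop[OF True], of b c j] by simp
        qed
        finally show ?thesis .
      qed
      also have "\<dots> = (\<Sum>j\<le>n. \<Sum>i\<in>{i. i \<in> {..n} \<and> j \<le> i}. F j i)"
      proof (rule sum.cong[OF refl])
        fix j assume j: "j \<in> {..n}"
        have e: "{i. i \<in> {..n} \<and> j \<le> i} = {j..n}" by auto
        have "(\<Sum>i\<in>{j..n}. F j i) = (\<Sum>k\<in>{0..n-j}. F j (j + k))"
        proof -
          have "{j..n} = {0+j..(n-j)+j}" using j by auto
          then have "(\<Sum>i\<in>{j..n}. F j i) = (\<Sum>k\<in>{0..n-j}. F j (k + j))"
            by (simp only: sum.shift_bounds_cl_nat_ivl)
          then show ?thesis by (simp add: add.commute)
        qed
        also have "\<dots> = (\<Sum>k\<le>n - j. a (take j w) * (b (take k (drop j w)) * c (drop k (drop j w))))"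
          by (rule sum.cong) (auto simp: F_def add.commute mult.assoc)
        finally show "a (take j w) * (\<Sum>k\<le>n - j. b (take k (drop j w)) * c (drop k (drop j w))) = (\<Sum>i\<in>{i. i \<in> {..n} \<and> j \<le> i}. F j i)"
          unfolding e by (simp add: sum_distrib_left)
      qed
      finally show ?thesis .
    qed
    show ?thesis unfolding L R by (rule sum.swap_restrict) auto
  qed
qed

declare sum.cong[fundef_cong]

function rinv :: "nat \<Rightarrow> nat \<Rightarrow> (nat list \<Rightarrow> real) \<Rightarrow> nat list \<Rightarrow> real" where
  "rinv d N x w = (if w \<in> words d N then (if w = [] then 1 else
      - (\<Sum>i\<in>{1..length w}. x (take i w) * rinv d N x (drop i w))) else 0)"
  by auto
termination by (relation "Wellfounded.measure (\<lambda>(d,N,x,w). length w)") auto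

declare rinv.simps[simp del]

lemma rinv_tens: "rinv d N x \<in> tens d N"
  unfolding tens_def by (auto intro: trans[OF rinv.simps])

lemma rinv_Nil: "rinv d N x [] = 1"
  by (subst rinv.simps) simp

lemma rinv_right: assumes "x [] = 1" shows "tprod d N x (rinv d N x) = tunit"
proof
  fix w show "tprod d N x (rinv d N x) w = tunit w"
  proof (cases "w \<in> words d N")
    case False
    then have "w \<noteq> []" by auto
    with False show ?thesis by (simp add: tprod_def tunit_def)
  next
    case True
    show ?thesis
    proof (cases "w = []")
      case True then show ?thesis using assms by (simp add: tprod_def tunit_def rinv_Nil)
    next
      case False
      have s: "{..length w} = insert 0 {1..length w}" by auto
      have "tprod d N x (rinv d N x) w = x [] * rinv d N x w + (\<Sum>i\<in>{1..length w}. x (take i w) * rinv d N x (drop i w))"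
        using True unfolding tprod_def s by simp
      also have "\<dots> = 0" using assms True False by (subst (1) rinv.simps) simp
      finally show ?thesis using False by (simp add: tunit_def)
    qed
  qed
qed

lemma tinv_props:
  assumes x: "x \<in> tens d N" and x1: "x [] = 1"
  shows "tinv d N x = rinv d N x" "tprod d N x (tinv d N x) = tunit" "tprod d N (tinv d N x) x = tunit"
proof -
  let ?y = "rinv d N x"
  have xy: "tprod d N x ?y = tunit" using rinv_right[of x] x1 by blast
  have yy: "tprod d N ?y (rinv d N ?y) = tunit" using rinv_right[of "rinv d N x"] rinv_Nil by blast
  have "x = tprod d N x tunit" using tprod_tunit_right[OF x] by simp
  also have "\<dots> = tprod d N (tprod d N x ?y) (rinv d N ?y)" by (simp add: yy tprod_assoc)
  also have "\<dots> = rinv d N ?y" by (simp add: xy tprod_tunit_left rinv_tens)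
  finally have "x = rinv d N ?y" .
  then have yx: "tprod d N ?y x = tunit" using yy by simp
  have P: "?y \<in> tens d N \<and> tprod d N x ?y = tunit \<and> tprod d N ?y x = tunit"
    using xy yx rinv_tens by blast
  have U: "z = ?y" if "z \<in> tens d N \<and> tprod d N x z = tunit \<and> tprod d N z x = tunit" for z
  proof -
    have "z = tprod d N z tunit" using that tprod_tunit_right by auto
    also have "\<dots> = tprod d N (tprod d N z x) ?y" by (simp add: xy tprod_assoc)
    also have "\<dots> = ?y" using that by (simp add: tprod_tunit_left rinv_tens)
    finally show ?thesis .
  qed
  have "tinv d N x = ?y" unfolding tinv_def using P U by (rule the_equality)
  then show "tinv d N x = rinv d N x" "tprod d N x (tinv d N x) = tunit" "tprod d N (tinv d N x) x = tunit"
    using xy yx by auto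
qed


definition ck :: "nat \<Rightarrow> real set \<Rightarrow> (real \<Rightarrow> 'a::real_normed_vector) \<Rightarrow> bool" where
  "ck k S h \<longleftrightarrow> (\<exists>D. D 0 = h \<and> (\<forall>j<k. \<forall>t\<in>S. (D j has_vector_derivative D (Suc j) t) (at t within S)))"

lemma ck_0[simp]: "ck 0 S h" by (auto simp: ck_def)

lemma ck_Suc: "ck (Suc k) S h \<longleftrightarrow>
   (\<exists>h'. (\<forall>t\<in>S. (h has_vector_derivative h' t) (at t within S)) \<and> ck k S h')"
proof
  assume "ck (Suc k) S h"
  then obtain D where D: "D 0 = h" "\<forall>j<Suc k. \<forall>t\<in>S. (D j has_vector_derivative D (Suc j) t) (at t within S)"
    by (auto simp: ck_def)
  have "ck k S (D 1)" unfolding ck_def using D(2) by (intro exI[of _ "\<lambda>j. D (Suc j)"]) auto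
  moreover have "\<forall>t\<in>S. (h has_vector_derivative D 1 t) (at t within S)" using D by auto
  ultimately show "\<exists>h'. (\<forall>t\<in>S. (h has_vector_derivative h' t) (at t within S)) \<and> ck k S h'" by blast
next
  assume "\<exists>h'. (\<forall>t\<in>S. (h has_vector_derivative h' t) (at t within S)) \<and> ck k S h'"
  then obtain h' D where h': "\<forall>t\<in>S. (h has_vector_derivative h' t) (at t within S)" and
     D: "D 0 = h'" "\<forall>j<k. \<forall>t\<in>S. (D j has_vector_derivative D (Suc j) t) (at t within S)"
    by (auto simp: ck_def)
  show "ck (Suc k) S h" unfolding ck_def
  proof (intro exI[of _ "\<lambda>j. case j of 0 \<Rightarrow> h | Suc i \<Rightarrow> D i"] conjI allI impI ballI)
    fix j t assume "j < Suc k" "t \<in> S"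
    then show "((case j of 0 \<Rightarrow> h | Suc i \<Rightarrow> D i) has_vector_derivative
      (case Suc j of 0 \<Rightarrow> h | Suc i \<Rightarrow> D i) t) (at t within S)"
      using h' D by (cases j) auto
  qed simp
qed

lemma ck_SucD: "ck (Suc k) S h \<Longrightarrow> ck k S h"
  by (auto simp: ck_def)

lemma ck_const: "ck k S (\<lambda>t. c)"
  unfolding ck_def
  by (intro exI[of _ "\<lambda>j. if j = 0 then (\<lambda>t. c) else (\<lambda>t. 0)"]) (simp add: has_vector_derivative_const)

lemma ck_add: "ck k S u \<Longrightarrow> ck k S v \<Longrightarrow> ck k S (\<lambda>t. u t + v t)"
proof -
  assume "ck k S u" "ck k S v"
  then obtain D1 D2 where D1: "D1 0 = u" "\<forall>j<k. \<forall>t\<in>S. (D1 j has_vector_derivative D1 (Suc j) t) (at t within S)"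
    and D2: "D2 0 = v" "\<forall>j<k. \<forall>t\<in>S. (D2 j has_vector_derivative D2 (Suc j) t) (at t within S)"
    by (auto simp: ck_def)
  show ?thesis unfolding ck_def
    by (intro exI[of _ "\<lambda>j t. D1 j t + D2 j t"]) (use D1 D2 in \<open>auto intro!: has_vector_derivative_add\<close>)
qed

lemma ck_sum: "finite A \<Longrightarrow> (\<And>a. a \<in> A \<Longrightarrow> ck k S (F a)) \<Longrightarrow> ck k S (\<lambda>t. \<Sum>a\<in>A. F a t)"
  by (induction A rule: finite_induct) (auto intro: ck_add ck_const)

lemma ck_linear: assumes L: "bounded_linear L" and h: "ck k S h" shows "ck k S (\<lambda>t. L (h t))"
proof -
  obtain D where D: "D 0 = h" "\<forall>j<k. \<forall>t\<in>S. (D j has_vector_derivative D (Suc j) t) (at t within S)"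
    using h by (auto simp: ck_def)
  show ?thesis unfolding ck_def
    by (intro exI[of _ "\<lambda>j t. L (D j t)"]) (use D in \<open>auto intro!: bounded_linear.has_vector_derivative[OF L]\<close>)
qed

lemma ck_scaleR: "ck k S (u :: real \<Rightarrow> real) \<Longrightarrow> ck k S v \<Longrightarrow> ck k S (\<lambda>t. u t *\<^sub>R v t)"
proof (induction k arbitrary: u v)
  case 0 then show ?case by simp
next
  case (Suc k)
  obtain u' where u': "\<forall>t\<in>S. (u has_vector_derivative u' t) (at t within S)" "ck k S u'"
    using Suc.prems(1) ck_Suc by blast
  obtain v' where v': "\<forall>t\<in>S. (v has_vector_derivative v' t) (at t within S)" "ck k S v'"
    using Suc.prems(2) ck_Suc by blast
  have u: "ck k S u" and v: "ck k S v" using Suc.prems ck_SucD by blast+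
  show ?case unfolding ck_Suc
  proof (intro exI[of _ "\<lambda>t. u t *\<^sub>R v' t + u' t *\<^sub>R v t"] conjI ballI)
    fix t assume "t \<in> S"
    then show "((\<lambda>t. u t *\<^sub>R v t) has_vector_derivative u t *\<^sub>R v' t + u' t *\<^sub>R v t) (at t within S)"
      using u' v' by (intro has_vector_derivative_scaleR) (auto simp: has_real_derivative_iff_has_vector_derivative)
  next
    show "ck k S (\<lambda>t. u t *\<^sub>R v' t + u' t *\<^sub>R v t)"
      by (intro ck_add Suc.IH u v u' v')
  qed
qed

lemma ck_cong: assumes h: "ck k S h" and eq: "\<And>t. t \<in> S \<Longrightarrow> h t = g t" shows "ck k S g"
proof -
  obtain D where D: "D 0 = h" "\<forall>j<k. \<forall>t\<in>S. (D j has_vector_derivative D (Suc j) t) (at t within S)"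
    using h by (auto simp: ck_def)
  show ?thesis unfolding ck_def
  proof (intro exI[of _ "\<lambda>j. if j = 0 then g else D j"] conjI allI impI ballI)
    fix j t assume j: "j < k" and t: "t \<in> S"
    show "((if j = 0 then g else D j) has_vector_derivative (if Suc j = 0 then g else D (Suc j)) t) (at t within S)"
    proof (cases "j = 0")
      case True
      have "(h has_vector_derivative D 1 t) (at t within S)" using D j t True by auto
      then have "(g has_vector_derivative D 1 t) (at t within S)"
        by (rule has_vector_derivative_weaken[where T=S]) (use t eq in auto)
      then show ?thesis using True by simp
    next
      case False then show ?thesis using D j t by auto
    qed
  qed simp
qed

lemma ck_unique:
  fixes a b :: real
  assumes ab: "a < b"
    and D1: "D1 0 = h" "\<forall>j<k1. \<forall>t\<in>{a..b}. (D1 j has_vector_derivative D1 (Suc j) t) (at t within {a..b})"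
    and D2: "D2 0 = h" "\<forall>j<k2. \<forall>t\<in>{a..b}. (D2 j has_vector_derivative D2 (Suc j) t) (at t within {a..b})"
  shows "j \<le> k1 \<Longrightarrow> j \<le> k2 \<Longrightarrow> t \<in> {a..b} \<Longrightarrow> D1 j t = D2 j t"
proof (induction j arbitrary: t)
  case 0 then show ?case using D1 D2 by simp
next
  case (Suc j)
  have d1: "(D1 j has_vector_derivative D1 (Suc j) t) (at t within {a..b})" using D1 Suc by auto
  have d2: "(D2 j has_vector_derivative D2 (Suc j) t) (at t within {a..b})" using D2 Suc by auto
  have d1': "(D2 j has_vector_derivative D1 (Suc j) t) (at t within {a..b})"
    using Suc by (intro has_vector_derivative_weaken[OF d1, of "{a..b}"]) auto
  show ?case
  proof -
    have "cbox a b = {a..b}" by simp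
    then show ?thesis
      using vector_derivative_unique_within_closed_interval[of a b t "D2 j"] ab d1' d2 Suc by auto
  qed
qed

lemma ck_smooth:
  fixes a b :: real
  assumes ab: "a < b" and all: "\<And>k. ck k {a..b} h"
  shows "smooth_on {a..b} h"
proof -
  define S where "S = {a..b}"
  have "\<forall>k. \<exists>D. D 0 = h \<and> (\<forall>j<k. \<forall>t\<in>S. (D j has_vector_derivative D (Suc j) t) (at t within S))"
  proof
    fix k show "\<exists>D. D 0 = h \<and> (\<forall>j<k. \<forall>t\<in>S. (D j has_vector_derivative D (Suc j) t) (at t within S))"
      using all[of k] unfolding ck_def S_def .
  qed
  then obtain W where W0: "\<forall>k. W k 0 = h \<and> (\<forall>j<k. \<forall>t\<in>S. (W k j has_vector_derivative W k (Suc j) t) (at t within S))"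
    by (rule choice[THEN exE]) 
  have W: "\<And>k. W k 0 = h" "\<And>k j t. j < k \<Longrightarrow> t \<in> S \<Longrightarrow> (W k j has_vector_derivative W k (Suc j) t) (at t within S)"
    using W0 by simp_all
  have U: "W k1 j t = W k2 j t" if "j \<le> k1" "j \<le> k2" "t \<in> S" for k1 k2 j t
  proof -
    have a1: "\<forall>j<k1. \<forall>t\<in>{a..b}. (W k1 j has_vector_derivative W k1 (Suc j) t) (at t within {a..b})"
      unfolding S_def[symmetric] using W(2) by blast
    have a2: "\<forall>j<k2. \<forall>t\<in>{a..b}. (W k2 j has_vector_derivative W k2 (Suc j) t) (at t within {a..b})"
      unfolding S_def[symmetric] using W(2) by blast
    have tt: "t \<in> {a..b}" using that S_def by simp
    show ?thesis using ck_unique[OF ab, of "W k1" h k1 "W k2" k2 j t] W(1) a1 a2 that(1,2) tt by blast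
  qed
  show ?thesis unfolding smooth_on_def
  proof (intro exI[of _ "\<lambda>k. W (Suc k) k"] conjI allI ballI)
    show "W (Suc 0) 0 = h" by (rule W)
    fix k t assume t: "t \<in> {a..b}"
    have A: "(W (Suc (Suc k)) k has_vector_derivative W (Suc (Suc k)) (Suc k) t) (at t within S)"
      using W(2)[of k "Suc (Suc k)" t] t by (simp add: S_def)
    have B: "\<And>x. x \<in> S \<Longrightarrow> W (Suc (Suc k)) k x = W (Suc k) k x"
      by (rule U) auto
    have "(W (Suc k) k has_vector_derivative W (Suc (Suc k)) (Suc k) t) (at t within S)"
      by (rule has_vector_derivative_weaken[OF A]) (use t B in \<open>auto simp: S_def\<close>)
    then show "(W (Suc k) k has_vector_derivative W (Suc (Suc k)) (Suc k) t) (at t within {a..b})"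
      by (simp add: S_def)
  qed
qed

lemma smooth_ck: "smooth_on S h \<Longrightarrow> ck k S h"
  by (auto simp: smooth_on_def ck_def)

lemma smooth_shift: "smooth_on S h \<Longrightarrow> \<exists>h'. (\<forall>t\<in>S. (h has_vector_derivative h' t) (at t within S)) \<and> smooth_on S h'"
proof -
  assume "smooth_on S h"
  then obtain D where D: "D 0 = h" "\<forall>k. \<forall>t\<in>S. (D k has_vector_derivative D (Suc k) t) (at t within S)"
    by (auto simp: smooth_on_def)
  have "smooth_on S (D 1)" unfolding smooth_on_def using D by (intro exI[of _ "\<lambda>k. D (Suc k)"]) auto
  then show ?thesis using D by auto
qed


definition Gn :: "nat \<Rightarrow> 'e::finite vfield \<Rightarrow> bool" where
  "Gn n g \<longleftrightarrow> (\<forall>is. length is \<le> n \<longrightarrow> (\<forall>y. iter_pd is g differentiable (at y)))"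

definition Ginf :: "'e::finite vfield \<Rightarrow> bool" where
  "Ginf g \<longleftrightarrow> (\<forall>n. Gn n g)"

lemma iter_pd_snoc: "iter_pd (is @ [i]) g = iter_pd is (pd i g)"
  by (induction "is") auto

lemma Gn_0: "Gn 0 g \<longleftrightarrow> (\<forall>y. g differentiable (at y))"
  by (simp add: Gn_def)

lemma Gn_Suc: fixes g :: "'e::finite vfield" shows "Gn (Suc n) g \<longleftrightarrow> (\<forall>y. g differentiable (at y)) \<and> (\<forall>i. Gn n (pd i g))"
proof
  assume A: "Gn (Suc n) g"
  have "\<forall>y. g differentiable (at y)" using A[unfolded Gn_def, rule_format, of "[]"] by simp
  moreover have "Gn n (pd i g)" for i :: 'e
    unfolding Gn_def
  proof (intro allI impI)
    fix "is" :: "'e list" and y :: "real^'e" assume "length is \<le> n"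
    then show "iter_pd is (pd i g) differentiable (at y)"
      using A[unfolded Gn_def, rule_format, of "is @ [i]"] by (simp add: iter_pd_snoc)
  qed
  ultimately show "(\<forall>y. g differentiable (at y)) \<and> (\<forall>i. Gn n (pd i g))" by blast
next
  assume A: "(\<forall>y. g differentiable (at y)) \<and> (\<forall>i. Gn n (pd i g))"
  show "Gn (Suc n) g" unfolding Gn_def
  proof (intro allI impI)
    fix "is" :: "'e list" and y :: "real^'e" assume l: "length is \<le> Suc n"
    show "iter_pd is g differentiable (at y)"
    proof (cases "is" rule: rev_exhaust)
      case Nil then show ?thesis using A by simp
    next
      case (snoc js i)
      then have "length js \<le> n" using l by simp
      then show ?thesis using A snoc by (simp add: iter_pd_snoc Gn_def)
    qed
  qed
qed

lemma Gn_SucD: "Gn (Suc n) g \<Longrightarrow> Gn n g"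
  by (simp add: Gn_def)

lemma Ginf_diff: "Ginf g \<Longrightarrow> g differentiable (at y)"
  using Gn_0 Ginf_def by blast

lemma Ginf_pd: "Ginf g \<Longrightarrow> Ginf (pd i g)"
  using Gn_Suc Ginf_def by blast

lemma pd_const: "pd i (\<lambda>y. c) = (\<lambda>y. 0 :: real^'e::finite)"
proof
  fix y :: "real^'e"
  have "((\<lambda>y. c) has_derivative (\<lambda>h. 0)) (at y)" by (rule has_derivative_const)
  then have "frechet_derivative (\<lambda>y. c) (at y) = (\<lambda>h. 0)" by (rule frechet_derivative_at[symmetric])
  then show "pd i (\<lambda>y. c) y = 0" unfolding pd_def by simp
qed

lemma Gn_const: "Gn n (\<lambda>y. c)"
proof (induction n arbitrary: c)
  case 0 then show ?case by (simp add: Gn_0)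
next
  case (Suc n) then show ?case by (simp add: Gn_Suc pd_const)
qed

lemma pd_add:
  assumes "\<And>y. A differentiable (at y)" "\<And>y. B differentiable (at y)"
  shows "pd i (\<lambda>y. A y + B y) = (\<lambda>y. pd i A y + pd i B y)"
proof
  fix y
  have a: "(A has_derivative frechet_derivative A (at y)) (at y)" using assms frechet_derivative_works by blast
  have b: "(B has_derivative frechet_derivative B (at y)) (at y)" using assms frechet_derivative_works by blast
  have "((\<lambda>y. A y + B y) has_derivative (\<lambda>h. frechet_derivative A (at y) h + frechet_derivative B (at y) h)) (at y)"
    by (rule has_derivative_add[OF a b])
  then have "frechet_derivative (\<lambda>y. A y + B y) (at y) = (\<lambda>h. frechet_derivative A (at y) h + frechet_derivative B (at y) h)"
    by (rule frechet_derivative_at[symmetric])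
  then show "pd i (\<lambda>y. A y + B y) y = pd i A y + pd i B y"
    unfolding pd_def by simp
qed

lemma Gn_add: "Gn n A \<Longrightarrow> Gn n B \<Longrightarrow> Gn n (\<lambda>y. A y + B y)"
proof (induction n arbitrary: A B)
  case 0 then show ?case by (simp add: Gn_0)
next
  case (Suc n)
  have dA: "\<And>y. A differentiable (at y)" and dB: "\<And>y. B differentiable (at y)" using Suc.prems Gn_Suc by blast+
  show ?case unfolding Gn_Suc
  proof (intro conjI allI)
    fix y show "(\<lambda>y. A y + B y) differentiable (at y)" using dA dB by simp
  next
    fix i show "Gn n (pd i (\<lambda>y. A y + B y))"
      unfolding pd_add[OF dA dB] using Suc Gn_Suc by blast
  qed
qed

lemma Gn_sum: "finite S \<Longrightarrow> (\<And>j. j \<in> S \<Longrightarrow> Gn n (F j)) \<Longrightarrow> Gn n (\<lambda>y. \<Sum>j\<in>S. F j y)"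
  by (induction S rule: finite_induct) (auto intro: Gn_add Gn_const)

definition Pr :: "'e::finite vfield \<Rightarrow> 'e \<Rightarrow> 'e vfield \<Rightarrow> 'e vfield" where
  "Pr g j h = (\<lambda>y. (g y $ j) *\<^sub>R h y)"

lemma pd_Pr:
  assumes "\<And>y. g differentiable (at y)" "\<And>y. h differentiable (at y)"
  shows "pd i (Pr g j h) = (\<lambda>y. Pr (pd i g) j h y + Pr g j (pd i h) y)"
proof
  fix y
  have a: "(g has_derivative frechet_derivative g (at y)) (at y)" using assms frechet_derivative_works by blast
  have b: "(h has_derivative frechet_derivative h (at y)) (at y)" using assms frechet_derivative_works by blast
  have a': "((\<lambda>y. g y $ j) has_derivative (\<lambda>v. frechet_derivative g (at y) v $ j)) (at y)"
    using bounded_linear.has_derivative[OF bounded_linear_vec_nth a] .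
  have "(Pr g j h has_derivative (\<lambda>v. (g y $ j) *\<^sub>R frechet_derivative h (at y) v + (frechet_derivative g (at y) v $ j) *\<^sub>R h y)) (at y)"
    unfolding Pr_def by (rule has_derivative_scaleR[OF a' b])
  then have "frechet_derivative (Pr g j h) (at y) = (\<lambda>v. (g y $ j) *\<^sub>R frechet_derivative h (at y) v + (frechet_derivative g (at y) v $ j) *\<^sub>R h y)"
    by (rule frechet_derivative_at[symmetric])
  then show "pd i (Pr g j h) y = Pr (pd i g) j h y + Pr g j (pd i h) y"
    unfolding pd_def by (simp add: Pr_def add.commute)
qed

lemma diff_nth:
  fixes g :: "'e::finite vfield"
  assumes "g differentiable (at y)" shows "(\<lambda>y. g y $ j) differentiable (at y)"
proof -
  obtain g' where "(g has_derivative g') (at y)" using assms differentiable_def by blast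
  then have "((\<lambda>y. g y $ j) has_derivative (\<lambda>v. g' v $ j)) (at y)"
    by (rule bounded_linear.has_derivative[OF bounded_linear_vec_nth])
  then show ?thesis by (rule differentiableI)
qed

lemma Pr_diff:
  fixes g h :: "'e::finite vfield"
  assumes "g differentiable (at y)" "h differentiable (at y)" shows "Pr g j h differentiable (at y)"
  unfolding Pr_def by (rule differentiable_scaleR[OF diff_nth[OF assms(1)] assms(2)])

lemma Gn_Pr: "Gn n g \<Longrightarrow> Gn n h \<Longrightarrow> Gn n (Pr g j h)"
proof (induction n arbitrary: g h)
  case 0
  then show ?case by (simp add: Gn_0 Pr_diff)
next
  case (Suc n)
  have dg: "\<And>y. g differentiable (at y)" and dh: "\<And>y. h differentiable (at y)" using Suc.prems Gn_Suc by blast+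
  then have "\<And>y. Pr g j h differentiable (at y)" by (simp add: Pr_diff)
  moreover have "Gn n (pd i (Pr g j h))" for i
  proof -
    have "Gn n (pd i g)" "Gn n (pd i h)" "Gn n g" "Gn n h" using Suc.prems Gn_Suc Gn_SucD by blast+
    then show ?thesis unfolding pd_Pr[OF dg dh] by (intro Gn_add Suc.IH)
  qed
  ultimately show ?case by (simp add: Gn_Suc)
qed

lemma frechet_expand:
  fixes h :: "'e::finite vfield"
  assumes "h differentiable (at y)"
  shows "frechet_derivative h (at y) v = (\<Sum>j\<in>UNIV. (v $ j) *\<^sub>R pd j h y)"
proof -
  have lin: "linear (frechet_derivative h (at y))"
    using assms frechet_derivative_works has_derivative_linear by blast
  have "v = (\<Sum>j\<in>UNIV. (v $ j) *\<^sub>R axis j 1)"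
    using basis_expansion[of v] by (simp add: scalar_mult_eq_scaleR)
  then have "frechet_derivative h (at y) v = frechet_derivative h (at y) (\<Sum>j\<in>UNIV. (v $ j) *\<^sub>R axis j 1)" by simp
  also have "\<dots> = (\<Sum>j\<in>UNIV. (v $ j) *\<^sub>R frechet_derivative h (at y) (axis j 1))"
    using lin by (simp add: linear_sum linear_scale)
  finally show ?thesis by (simp add: pd_def)
qed

lemma vf_tri_expand:
  assumes "\<And>y. h differentiable (at y)"
  shows "vf_tri g h = (\<lambda>y. \<Sum>j\<in>UNIV. Pr g j (pd j h) y)"
  using frechet_expand[OF assms] by (auto simp: vf_tri_def Pr_def)

lemma Ginf_vf_tri: "Ginf g \<Longrightarrow> Ginf h \<Longrightarrow> Ginf (vf_tri g h)"
  unfolding Ginf_def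
proof
  fix n assume g: "\<forall>n. Gn n g" and h: "\<forall>n. Gn n h"
  have "\<And>y. h differentiable (at y)" using h Gn_0 by blast
  then have eq: "vf_tri g h = (\<lambda>y. \<Sum>j\<in>UNIV. Pr g j (pd j h) y)" by (rule vf_tri_expand)
  have pj: "Gn n (pd j h)" for j using h[rule_format, of "Suc n"] unfolding Gn_Suc by blast
  show "Gn n (vf_tri g h)" unfolding eq
    using g pj by (intro Gn_sum Gn_Pr) auto
qed

lemma Ginf_id: "Ginf (id :: 'e::finite vfield)"
  unfolding Ginf_def
proof
  fix n
  have pid: "pd i (id :: 'e vfield) = (\<lambda>y. axis i 1)" for i
  proof
    fix y :: "real^'e"
    have "(id has_derivative id) (at y)" by (rule has_derivative_id)
    then have "frechet_derivative id (at y) = id" by (rule frechet_derivative_at[symmetric])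
    then show "pd i (id :: 'e vfield) y = axis i 1" unfolding pd_def by simp
  qed
  show "Gn n (id :: 'e vfield)"
  proof (cases n)
    case 0 then show ?thesis by (simp add: Gn_0 differentiableI[OF has_derivative_id])
  next
    case (Suc m) then show ?thesis by (simp add: Gn_Suc pid Gn_const differentiableI[OF has_derivative_id])
  qed
qed

lemma smooth_bdd_Ginf: "smooth_bdd g \<Longrightarrow> Ginf g"
  by (simp add: smooth_bdd_def Ginf_def Gn_def)

lemma Ginf_fw: "(\<And>i. i \<in> set w \<Longrightarrow> smooth_bdd (f i)) \<Longrightarrow> Ginf (fw f w)"
  by (induction f w rule: fw.induct) (auto simp: Ginf_id smooth_bdd_Ginf intro!: Ginf_vf_tri)


lemma finite_words: "finite (words d N)"
  unfolding words_def by (rule finite_lists_length_le) simp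

lemma shuffle_Nil_left: "shuffle [] w = [w]"
  by (simp add: shuffle_def)

lemma pair_shuffle_Nil: "pair_shuffle x [] w = x w"
  by (simp add: pair_shuffle_def shuffle_Nil_left)

lemma sgrp_unit:
  assumes sg: "sgrp d N T X" and t: "t \<in> {0..T}"
  shows "X t [] = 1"
proof -
  have tens: "\<And>t. t \<in> {0..T} \<Longrightarrow> X t \<in> tens d N"
    and nz: "\<exists>t\<in>{0..T}. X t \<noteq> (\<lambda>_. 0)"
    and sh: "\<And>t v w. t \<in> {0..T} \<Longrightarrow> set v \<subseteq> {1..d} \<Longrightarrow> set w \<subseteq> {1..d} \<Longrightarrow>
        length v + length w \<le> N \<Longrightarrow> pair_shuffle (X t) v w = X t v * X t w"
    and sm: "\<And>w. w \<in> words d N \<Longrightarrow> smooth_on {0..T} (\<lambda>t. X t w)"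
    using sg unfolding sgrp_def by blast+
  have sq: "X t [] = X t [] * X t []" if "t \<in> {0..T}" for t
    using sh[OF that, of "[]" "[]"] by (simp add: pair_shuffle_Nil)
  have zero: "X t = (\<lambda>_. 0)" if "t \<in> {0..T}" "X t [] = 0" for t
  proof
    fix w show "X t w = 0"
    proof (cases "w \<in> words d N")
      case True
      then have "pair_shuffle (X t) [] w = X t [] * X t w"
        using sh[OF that(1), of "[]" w] by (simp add: words_def)
      then show ?thesis using that by (simp add: pair_shuffle_Nil)
    next
      case False then show ?thesis using tens[OF that(1)] by (simp add: tens_def)
    qed
  qed
  have val: "X t [] = 0 \<or> X t [] = 1" if "t \<in> {0..T}" for t
    using sq[OF that] by (metis mult_cancel_right1 mult_zero_right)
  obtain t0 where t0: "t0 \<in> {0..T}" "X t0 \<noteq> (\<lambda>_. 0)" using nz by blast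
  have x0: "X t0 [] = 1" using val[OF t0(1)] zero[OF t0(1)] t0(2) by blast
  obtain D where D: "D 0 = (\<lambda>t. X t [])" "\<forall>k. \<forall>t\<in>{0..T}. (D k has_vector_derivative D (Suc k) t) (at t within {0..T})"
    using sm[of "[]"] by (auto simp: smooth_on_def)
  have dd: "\<forall>t\<in>{0..T}. ((\<lambda>t. X t []) has_vector_derivative D 1 t) (at t within {0..T})"
  proof
    fix t assume "t \<in> {0..T}"
    then have "(D 0 has_vector_derivative D (Suc 0) t) (at t within {0..T})" using D(2) by blast
    then show "((\<lambda>t. X t []) has_vector_derivative D 1 t) (at t within {0..T})" using D(1) by simp
  qed
  have cont: "continuous_on {0..T} (\<lambda>t. X t [])"
    using dd by (intro continuous_on_vector_derivative[where f'="D 1"]) auto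
  show ?thesis
  proof (rule ccontr)
    assume "X t [] \<noteq> 1"
    then have x1: "X t [] = 0" using val[OF t] by blast
    have "\<exists>x. min t t0 \<le> x \<and> x \<le> max t t0 \<and> X x [] = 1/2"
    proof (cases "t \<le> t0")
      case True
      have "continuous_on {t..t0} (\<lambda>t. X t [])"
        by (rule continuous_on_subset[OF cont]) (use t t0 in auto)
      then show ?thesis using IVT'[of "\<lambda>t. X t []" t "1/2" t0] x1 x0 True by auto
    next
      case False
      have "continuous_on {t0..t} (\<lambda>t. X t [])"
        by (rule continuous_on_subset[OF cont]) (use t t0 in auto)
      then show ?thesis using IVT2'[of "\<lambda>t. X t []" t "1/2" t0] x1 x0 False by auto
    qed
    then obtain x where x: "min t t0 \<le> x" "x \<le> max t t0" "X x [] = 1/2" by blast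
    have "x \<in> {0..T}" using x t t0 by auto
    then show False using val x(3) by fastforce
  qed
qed

lemma ck_mult: "ck k S (u :: real \<Rightarrow> real) \<Longrightarrow> ck k S v \<Longrightarrow> ck k S (\<lambda>t. u t * v t)"
  using ck_scaleR[of k S u v] by simp

lemma ck_chain:
  fixes Y :: "real \<Rightarrow> real^'e::finite"
  shows "ck k S Y \<Longrightarrow> Ginf g \<Longrightarrow> ck k S (\<lambda>t. g (Y t))"
proof (induction k arbitrary: g)
  case 0 then show ?case by simp
next
  case (Suc k)
  obtain Y' where Y': "\<forall>t\<in>S. (Y has_vector_derivative Y' t) (at t within S)" "ck k S Y'"
    using Suc.prems(1) ck_Suc by blast
  have Yk: "ck k S Y" using Suc.prems(1) by (rule ck_SucD)
  show ?case unfolding ck_Suc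
  proof (intro exI[of _ "\<lambda>t. \<Sum>j\<in>UNIV. (Y' t $ j) *\<^sub>R pd j g (Y t)"] conjI ballI)
    fix t assume t: "t \<in> S"
    have gd: "g differentiable (at (Y t))" using Suc.prems(2) by (rule Ginf_diff)
    then have "(g has_derivative frechet_derivative g (at (Y t))) (at (Y t) within Y ` S)"
      using frechet_derivative_works has_derivative_at_withinI by blast
    from vector_derivative_diff_chain_within[OF Y'(1)[rule_format, OF t] this]
    have "((\<lambda>t. g (Y t)) has_vector_derivative frechet_derivative g (at (Y t)) (Y' t)) (at t within S)"
      by (simp add: comp_def)
    then show "((\<lambda>t. g (Y t)) has_vector_derivative (\<Sum>j\<in>UNIV. (Y' t $ j) *\<^sub>R pd j g (Y t))) (at t within S)"
      by (simp add: frechet_expand[OF gd])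
  next
    show "ck k S (\<lambda>t. \<Sum>j\<in>UNIV. (Y' t $ j) *\<^sub>R pd j g (Y t))"
    proof (rule ck_sum)
      fix j :: 'e
      have "ck k S (\<lambda>t. Y' t $ j)" using ck_linear[OF bounded_linear_vec_nth Y'(2)] .
      moreover have "ck k S (\<lambda>t. pd j g (Y t))" using Suc.IH[OF Yk Ginf_pd[OF Suc.prems(2)]] .
      ultimately show "ck k S (\<lambda>t. (Y' t $ j) *\<^sub>R pd j g (Y t))" by (rule ck_scaleR)
    qed simp
  qed
qed

lemma o_of_deriv:
  fixes e :: "real \<Rightarrow> 'a::real_normed_vector"
  assumes "(e has_vector_derivative 0) (at s within S)" "e s = 0"
  shows "(\<lambda>t. norm (e t)) \<in> o[at s within S](\<lambda>t. t - s)"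
proof (rule smalloI_tendsto)
  have "((\<lambda>y. (1 / norm (y - s)) *\<^sub>R (e y - (e s + (y - s) *\<^sub>R 0))) \<longlongrightarrow> 0) (at s within S)"
    using assms(1) unfolding has_vector_derivative_def has_derivative_within by simp
  then have "((\<lambda>y. (1 / norm (y - s)) *\<^sub>R e y) \<longlongrightarrow> 0) (at s within S)"
    using assms(2) by simp
  then have "((\<lambda>y. norm ((1 / norm (y - s)) *\<^sub>R e y)) \<longlongrightarrow> 0) (at s within S)"
    by (simp only: tendsto_norm_zero_iff)
  moreover have "norm ((1 / norm (y - s)) *\<^sub>R e y) = \<bar>norm (e y) / (y - s)\<bar>" for y
    by (simp add: abs_div)
  ultimately have "((\<lambda>y. \<bar>norm (e y) / (y - s)\<bar>) \<longlongrightarrow> 0) (at s within S)" by simp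
  then show "((\<lambda>y. norm (e y) / (y - s)) \<longlongrightarrow> 0) (at s within S)"
    by (simp only: tendsto_rabs_zero_iff)
  show "\<forall>\<^sub>F x in at s within S. x - s \<noteq> 0"
    by (simp add: eventually_at_filter)
qed

lemma deriv_of_o:
  fixes e :: "real \<Rightarrow> 'a::real_normed_vector"
  assumes "(\<lambda>t. norm (e t)) \<in> o[at s within S](\<lambda>t. t - s)" "e s = 0"
  shows "(e has_vector_derivative 0) (at s within S)"
proof -
  have "((\<lambda>y. norm (e y) / (y - s)) \<longlongrightarrow> 0) (at s within S)"
    using smalloD_tendsto[OF assms(1)] .
  then have "((\<lambda>y. \<bar>norm (e y) / (y - s)\<bar>) \<longlongrightarrow> 0) (at s within S)"
    by (simp only: tendsto_rabs_zero_iff)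
  moreover have "norm ((1 / norm (y - s)) *\<^sub>R e y) = \<bar>norm (e y) / (y - s)\<bar>" for y
    by (simp add: abs_div)
  ultimately have "((\<lambda>y. norm ((1 / norm (y - s)) *\<^sub>R e y)) \<longlongrightarrow> 0) (at s within S)" by simp
  then have "((\<lambda>y. (1 / norm (y - s)) *\<^sub>R e y) \<longlongrightarrow> 0) (at s within S)"
    by (simp only: tendsto_norm_zero_iff)
  then show ?thesis
    unfolding has_vector_derivative_def has_derivative_within using assms(2) by simp
qed


theorem proposition2p20:
  fixes d N :: nat and T :: real
    and X :: "real \<Rightarrow> nat list \<Rightarrow> real"
    and f :: "nat \<Rightarrow> real ^ 'e \<Rightarrow> real ^ 'e"
    and Y :: "real \<Rightarrow> real ^ 'e"
  assumes "T > 0" and "d \<ge> 1"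
    and "sgrp d N T X"
    and "\<forall>i\<in>{1..d}. smooth_bdd (f i)"
  shows "is_solution d N T X f Y \<longleftrightarrow>
    (\<forall>s\<in>{0..T}.
       (\<lambda>t. norm (Y t - Y s - (\<Sum>w\<in>words d N - {[]}. incr d N X s t w *\<^sub>R fw f w (Y s))))
         \<in> o[at s within {0..T}](\<lambda>t. t - s))"
proof -
  have T0: "0 < T" using assms(1) .
  have tens: "\<And>t. t \<in> {0..T} \<Longrightarrow> X t \<in> tens d N"
    and sm: "\<And>w. w \<in> words d N \<Longrightarrow> smooth_on {0..T} (\<lambda>t. X t w)"
    using assms(3) unfolding sgrp_def by blast+
  have unit: "\<And>t. t \<in> {0..T} \<Longrightarrow> X t [] = 1" using sgrp_unit[OF assms(3)] .
  have tinv_r: "\<And>t. t \<in> {0..T} \<Longrightarrow> tinv d N (X t) = rinv d N (X t)"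
    using tinv_props(1)[OF tens unit] .
  have tinv_l: "\<And>t. t \<in> {0..T} \<Longrightarrow> tprod d N (tinv d N (X t)) (X t) = tunit"
    using tinv_props(3)[OF tens unit] .
  have incr_ss: "\<And>s w. s \<in> {0..T} \<Longrightarrow> incr d N X s s w = tunit w"
    by (simp add: incr_def tinv_l)
  have "\<forall>u\<in>words d N. \<exists>h'. (\<forall>t\<in>{0..T}. ((\<lambda>t. X t u) has_vector_derivative h' t) (at t within {0..T})) \<and> smooth_on {0..T} h'"
    using sm smooth_shift by blast
  then obtain X1 where X1all: "\<forall>u\<in>words d N. (\<forall>t\<in>{0..T}. ((\<lambda>t. X t u) has_vector_derivative X1 u t) (at t within {0..T})) \<and> smooth_on {0..T} (X1 u)"
    by (rule bchoice[THEN exE])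
  have X1: "\<And>u t. u \<in> words d N \<Longrightarrow> t \<in> {0..T} \<Longrightarrow> ((\<lambda>t. X t u) has_vector_derivative X1 u t) (at t within {0..T})"
    and X1s: "\<And>u. u \<in> words d N \<Longrightarrow> smooth_on {0..T} (X1 u)"
    using X1all by blast+
  define a where "a w s = (\<Sum>i\<le>length w. tinv d N (X s) (take i w) * X1 (drop i w) s)" for w s
  have incr_deriv: "((\<lambda>t. incr d N X s t w) has_vector_derivative a w s) (at s within {0..T})"
    if s: "s \<in> {0..T}" and w: "w \<in> words d N" for s w
  proof -
    have eq: "(\<lambda>t. incr d N X s t w) = (\<lambda>t. \<Sum>i\<le>length w. tinv d N (X s) (take i w) * X t (drop i w))"
      using w by (simp add: incr_def tprod_words)
    have "((\<lambda>t. \<Sum>i\<le>length w. tinv d N (X s) (take i w) * X t (drop i w)) has_vector_derivative a w s) (at s within {0..T})"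
      unfolding a_def
    proof (rule has_vector_derivative_sum)
      fix i assume "i \<in> {..length w}"
      show "((\<lambda>t. tinv d N (X s) (take i w) * X t (drop i w)) has_vector_derivative
          tinv d N (X s) (take i w) * X1 (drop i w) s) (at s within {0..T})"
        by (rule has_vector_derivative_mult_right[OF X1[OF words_drop[OF w] s]])
    qed
    then show ?thesis unfolding eq .
  qed
  have dd_eq: "diag_deriv d N T X s w = a w s" if "s \<in> {0..T}" "w \<in> words d N" for s w
    unfolding diag_deriv_def
    by (rule vector_derivative_within_closed_interval[OF T0 that(1) incr_deriv[OF that]])
  have dd_Nil: "diag_deriv d N T X s [] = 0" if s: "s \<in> {0..T}" for s
  proof -
    have eq: "incr d N X s t [] = tinv d N (X s) [] * X t []" for t
      by (simp add: incr_def tprod_words)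
    have "((\<lambda>t. tinv d N (X s) []) has_vector_derivative 0) (at s within {0..T})"
      by (rule has_vector_derivative_const)
    then have "((\<lambda>t. incr d N X s t []) has_vector_derivative 0) (at s within {0..T})"
      by (rule has_vector_derivative_weaken) (use s unit in \<open>auto simp: eq\<close>)
    then show ?thesis unfolding diag_deriv_def
      by (rule vector_derivative_within_closed_interval[OF T0 s])
  qed
  have r_ck: "u \<in> words d N \<longrightarrow> ck k {0..T} (\<lambda>s. rinv d N (X s) u)" for u k
  proof (induction u rule: length_induct)
    case (1 u)
    show ?case
    proof
      assume u: "u \<in> words d N"
      show "ck k {0..T} (\<lambda>s. rinv d N (X s) u)"
      proof (cases "u = []")
        case True then show ?thesis by (simp add: rinv_Nil ck_const)
      next
        case False
        have eq: "(\<lambda>s. rinv d N (X s) u) = (\<lambda>s. - (\<Sum>i\<in>{1..length u}. X s (take i u) * rinv d N (X s) (drop i u)))"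
        proof
          fix s show "rinv d N (X s) u = - (\<Sum>i\<in>{1..length u}. X s (take i u) * rinv d N (X s) (drop i u))"
            using u False by (subst rinv.simps) simp
        qed
        have "ck k {0..T} (\<lambda>s. \<Sum>i\<in>{1..length u}. X s (take i u) * rinv d N (X s) (drop i u))"
        proof (rule ck_sum)
          fix i assume i: "i \<in> {1..length u}"
          have "ck k {0..T} (\<lambda>s. X s (take i u))" by (rule smooth_ck[OF sm[OF words_take[OF u]]])
          moreover have "ck k {0..T} (\<lambda>s. rinv d N (X s) (drop i u))"
            using "1"[rule_format, of "drop i u"] i words_drop[OF u] by auto
          ultimately show "ck k {0..T} (\<lambda>s. X s (take i u) * rinv d N (X s) (drop i u))" by (rule ck_mult)
        qed simp
        then show ?thesis unfolding eq by (rule ck_linear[OF bounded_linear_minus[OF bounded_linear_ident]])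
      qed
    qed
  qed
  have c_ck: "ck k {0..T} (\<lambda>s. tinv d N (X s) u)" if "u \<in> words d N" for u k
    using r_ck[of u k] that by (auto intro: ck_cong simp: tinv_r)
  have a_ck: "ck k {0..T} (a w)" if w: "w \<in> words d N" for w k
    unfolding a_def
  proof (rule ck_sum)
    fix i assume "i \<in> {..length w}"
    show "ck k {0..T} (\<lambda>s. tinv d N (X s) (take i w) * X1 (drop i w) s)"
      by (rule ck_mult[OF c_ck[OF words_take[OF w]] smooth_ck[OF X1s[OF words_drop[OF w]]]])
  qed simp
  have fwG: "Ginf (fw f w)" if "w \<in> words d N" for w
    using that assms(4) by (intro Ginf_fw) (auto simp: words_def)
  have fin: "finite (words d N - {[]})" using finite_words by simp
  have hsum: "((\<lambda>t. \<Sum>w\<in>words d N - {[]}. incr d N X s t w *\<^sub>R fw f w (Y s)) has_vector_derivative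
      (\<Sum>w\<in>words d N - {[]}. a w s *\<^sub>R fw f w (Y s))) (at s within {0..T})" if s: "s \<in> {0..T}" for s
  proof (rule has_vector_derivative_sum)
    fix w assume "w \<in> words d N - {[]}"
    then have w: "w \<in> words d N" by simp
    show "((\<lambda>t. incr d N X s t w *\<^sub>R fw f w (Y s)) has_vector_derivative a w s *\<^sub>R fw f w (Y s)) (at s within {0..T})"
      by (rule bounded_linear.has_vector_derivative[OF bounded_linear_scaleR_left incr_deriv[OF s w]])
  qed
  have h0: "(\<Sum>w\<in>words d N - {[]}. incr d N X s s w *\<^sub>R fw f w (Y s)) = 0" if s: "s \<in> {0..T}" for s
    by (rule sum.neutral) (simp add: incr_ss[OF s] tunit_def)
  have V_eq: "(\<Sum>w\<in>words d N. diag_deriv d N T X s w *\<^sub>R fw f w (Y s)) = (\<Sum>w\<in>words d N - {[]}. a w s *\<^sub>R fw f w (Y s))"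
    if s: "s \<in> {0..T}" for s
  proof -
    have "(\<Sum>w\<in>words d N. diag_deriv d N T X s w *\<^sub>R fw f w (Y s))
        = diag_deriv d N T X s [] *\<^sub>R fw f [] (Y s) + (\<Sum>w\<in>words d N - {[]}. diag_deriv d N T X s w *\<^sub>R fw f w (Y s))"
      by (rule sum.remove[OF finite_words words_Nil])
    also have "\<dots> = (\<Sum>w\<in>words d N - {[]}. a w s *\<^sub>R fw f w (Y s))"
      using dd_Nil[OF s] dd_eq[OF s] by simp
    finally show ?thesis .
  qed
  show ?thesis
  proof
    assume sol: "is_solution d N T X f Y"
    show "\<forall>s\<in>{0..T}. (\<lambda>t. norm (Y t - Y s - (\<Sum>w\<in>words d N - {[]}. incr d N X s t w *\<^sub>R fw f w (Y s))))
         \<in> o[at s within {0..T}](\<lambda>t. t - s)"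
    proof
      fix s :: real assume s: "s \<in> {0..T}"
      have Yd: "(Y has_vector_derivative (\<Sum>w\<in>words d N - {[]}. a w s *\<^sub>R fw f w (Y s))) (at s within {0..T})"
        using sol s V_eq[OF s] unfolding is_solution_def by metis
      have "((\<lambda>t. Y t - Y s - (\<Sum>w\<in>words d N - {[]}. incr d N X s t w *\<^sub>R fw f w (Y s))) has_vector_derivative
          ((\<Sum>w\<in>words d N - {[]}. a w s *\<^sub>R fw f w (Y s)) - 0 - (\<Sum>w\<in>words d N - {[]}. a w s *\<^sub>R fw f w (Y s)))) (at s within {0..T})"
        by (intro has_vector_derivative_diff Yd has_vector_derivative_const hsum[OF s])
      then have "((\<lambda>t. Y t - Y s - (\<Sum>w\<in>words d N - {[]}. incr d N X s t w *\<^sub>R fw f w (Y s))) has_vector_derivative 0) (at s within {0..T})"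
        by simp
      moreover have "Y s - Y s - (\<Sum>w\<in>words d N - {[]}. incr d N X s s w *\<^sub>R fw f w (Y s)) = 0"
        using h0[OF s] by simp
      ultimately show "(\<lambda>t. norm (Y t - Y s - (\<Sum>w\<in>words d N - {[]}. incr d N X s t w *\<^sub>R fw f w (Y s))))
         \<in> o[at s within {0..T}](\<lambda>t. t - s)"
        by (rule o_of_deriv)
    qed
  next
    assume R: "\<forall>s\<in>{0..T}. (\<lambda>t. norm (Y t - Y s - (\<Sum>w\<in>words d N - {[]}. incr d N X s t w *\<^sub>R fw f w (Y s))))
         \<in> o[at s within {0..T}](\<lambda>t. t - s)"
    have Yd: "(Y has_vector_derivative (\<Sum>w\<in>words d N - {[]}. a w s *\<^sub>R fw f w (Y s))) (at s within {0..T})"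
      if s: "s \<in> {0..T}" for s
    proof -
      let ?h = "\<lambda>t. \<Sum>w\<in>words d N - {[]}. incr d N X s t w *\<^sub>R fw f w (Y s)"
      have e0: "Y s - Y s - ?h s = 0" using h0[OF s] by simp
      have ed: "((\<lambda>t. Y t - Y s - ?h t) has_vector_derivative 0) (at s within {0..T})"
        using deriv_of_o[OF R[rule_format, OF s] e0] .
      have "((\<lambda>t. (Y t - Y s - ?h t) + Y s + ?h t) has_vector_derivative
          (0 + 0 + (\<Sum>w\<in>words d N - {[]}. a w s *\<^sub>R fw f w (Y s)))) (at s within {0..T})"
        by (intro has_vector_derivative_add ed has_vector_derivative_const hsum[OF s])
      then show ?thesis by simp
    qed
    have ck_all: "ck k {0..T} Y" for k
    proof (induction k)
      case 0 then show ?case by simp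
    next
      case (Suc k)
      show ?case unfolding ck_Suc
      proof (intro exI[of _ "\<lambda>s. \<Sum>w\<in>words d N - {[]}. a w s *\<^sub>R fw f w (Y s)"] conjI ballI)
        fix t assume "t \<in> {0..T}"
        then show "(Y has_vector_derivative (\<Sum>w\<in>words d N - {[]}. a w t *\<^sub>R fw f w (Y t))) (at t within {0..T})"
          by (rule Yd)
      next
        show "ck k {0..T} (\<lambda>s. \<Sum>w\<in>words d N - {[]}. a w s *\<^sub>R fw f w (Y s))"
        proof (rule ck_sum[OF fin])
          fix w assume "w \<in> words d N - {[]}"
          then have w: "w \<in> words d N" by simp
          show "ck k {0..T} (\<lambda>s. a w s *\<^sub>R fw f w (Y s))"
            by (rule ck_scaleR[OF a_ck[OF w] ck_chain[OF Suc.IH fwG[OF w]]])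
        qed
      qed
    qed
    have smY: "smooth_on {0..T} Y" using ck_smooth[OF T0 ck_all] .
    show "is_solution d N T X f Y"
      unfolding is_solution_def
    proof (intro conjI ballI smY)
      fix s assume s: "s \<in> {0..T}"
      show "(Y has_vector_derivative (\<Sum>w\<in>words d N. diag_deriv d N T X s w *\<^sub>R fw f w (Y s))) (at s within {0..T})"
        unfolding V_eq[OF s] by (rule Yd[OF s])
    qed
  qed
qed

end
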